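(* For every natural number $n\geq 64$, $$\iota(2^n-1)\leq n+1-\sum_{j=1}^{\lfloor \frac{\log n}{\log 2}\rfloor}\xi(n,j)+3\left\lfloor \frac{\log n}{\log 2}\right\rfloor,$$ where $0\leq \xi(n,j)<1$ are the quantities defined in the context.
   Context: An addition chain producing a positive integer $N$ is a sequence $1=s_1,2=s_2,s_3,\ldots,s_k=N$ in which every term after the first is the sum of two (not necessarily distinct) earlier terms; its length is the number of terms excluding the initial $1$ (here $k-1$). $\iota(N)$ denotes the length of the shortest addition chain producing $N$. The quantities $\xi(n,j)$ come from iterated halving of the exponent: set $n_0=n$ and $n_j=\frac{n_{j-1}-\frac{1}{2}(1-(-1)^{n_{j-1}})}{2}$ (i.e. $n_j=\lfloor n/2^j\rfloor$), and write $n_j=\frac{n}{2^j}-\xi(n,j)$; thus e.g. $\xi(n,1)=\frac{1}{4}(1-(-1)^n)$, and $0\leq \xi(n,j)<1$, with $\xi(n,j)=0$ for all $j$ when $n$ is a power of $2$. $\log$ is the natural logarithm and $\lfloor\cdot\rfloor$ the floor function. *)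

theory Defs
  imports "HOL-Analysis.Analysis"
begin

definition is_addition_chain :: "nat list \<Rightarrow> nat \<Rightarrow> bool" where
  "is_addition_chain cs N \<longleftrightarrow>
     cs \<noteq> [] \<and> cs ! 0 = 1 \<and> last cs = N \<and>
     (\<forall>i. 0 < i \<and> i < length cs \<longrightarrow> (\<exists>j k. j < i \<and> k < i \<and> cs ! i = cs ! j + cs ! k))"

definition iota :: "nat \<Rightarrow> nat" where
  "iota N = (LEAST l. \<exists>cs. is_addition_chain cs N \<and> length cs - 1 = l)"

definition xi :: "nat \<Rightarrow> nat \<Rightarrow> real" where
  "xi n j = real n / 2 ^ j - real (n div 2 ^ j)"

end

theory Submission
  imports Defs
begin

definition ch :: "nat list \<Rightarrow> bool" where
  "ch cs \<longleftrightarrow> cs \<noteq> [] \<and> cs ! 0 = 1 \<and>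
     (\<forall>i. 0 < i \<and> i < length cs \<longrightarrow> (\<exists>j k. j < i \<and> k < i \<and> cs ! i = cs ! j + cs ! k))"

lemma ch_snoc:
  assumes "ch cs" "x \<in> set cs" "y \<in> set cs"
  shows "ch (cs @ [x + y])"
proof -
  obtain a where a: "a < length cs" "cs ! a = x" using assms(2) by (metis in_set_conv_nth)
  obtain b where b: "b < length cs" "cs ! b = y" using assms(3) by (metis in_set_conv_nth)
  show ?thesis unfolding ch_def
  proof (intro conjI allI impI)
    show "cs @ [x + y] \<noteq> []" by simp
    show "(cs @ [x + y]) ! 0 = 1" using assms(1) unfolding ch_def by (simp add: nth_append)
    fix i assume i: "0 < i \<and> i < length (cs @ [x + y])"
    show "\<exists>j k. j < i \<and> k < i \<and> (cs @ [x + y]) ! i = (cs @ [x + y]) ! j + (cs @ [x + y]) ! k"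
    proof (cases "i < length cs")
      case True
      then obtain j k where "j < i" "k < i" "cs ! i = cs ! j + cs ! k"
        using assms(1) i unfolding ch_def by blast
      then show ?thesis using True by (intro exI[of _ j] exI[of _ k]) (simp add: nth_append)
    next
      case False
      then have "i = length cs" using i by simp
      then show ?thesis using a b by (intro exI[of _ a] exI[of _ b]) (simp add: nth_append)
    qed
  qed
qed

lemma ch_one: "ch cs \<Longrightarrow> 1 \<in> set cs"
  unfolding ch_def by (metis length_greater_0_conv nth_mem)

lemma ch_double:
  assumes "ch cs"
  shows "\<exists>ds. ch (cs @ ds) \<and> length ds = k \<and> last (cs @ ds) = last cs * 2 ^ k"
proof (induction k)
  case 0
  then show ?case using assms by (intro exI[of _ "[]"]) simp
next
  case (Suc k)
  then obtain ds where ds: "ch (cs @ ds)" "length ds = k" "last (cs @ ds) = last cs * 2 ^ k" by blast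
  have ne: "cs @ ds \<noteq> []" using ds(1) unfolding ch_def by simp
  have "last (cs @ ds) \<in> set (cs @ ds)" using ne by (rule last_in_set)
  then have "ch ((cs @ ds) @ [last (cs @ ds) + last (cs @ ds)])" using ch_snoc ds(1) by blast
  then show ?case using ds
    by (intro exI[of _ "ds @ [last (cs @ ds) + last (cs @ ds)]"]) simp
qed

lemma aux: "(x::nat) \<ge> 1 \<Longrightarrow> (x - 1) * x + (x - 1) = x * x - 1"
  by (cases x) (auto simp: algebra_simps)

lemma build:
  "m \<ge> 1 \<Longrightarrow> m < 2 ^ (t + 1) \<Longrightarrow>
     \<exists>cs. ch cs \<and> last cs = 2 ^ m - 1 \<and> length cs \<le> m + 2 * t"
proof (induction m arbitrary: t rule: less_induct)
  case (less m)
  show ?case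
  proof (cases "m = 1")
    case True
    have "ch [1]" unfolding ch_def by (simp; presburger)
    then show ?thesis using True by (intro exI[of _ "[1]"]) simp
  next
    case False
    then have m2: "m \<ge> 2" using less.prems by simp
    have t1: "t \<ge> 1"
    proof (rule ccontr)
      assume "\<not> t \<ge> 1"
      then have "t = 0" by simp
      then show False using less.prems m2 by simp
    qed
    obtain t' where t': "t = t' + 1" using t1 by (metis add.commute le_Suc_ex)
    obtain k where k: "m = 2 * k \<or> m = 2 * k + 1" by (metis oddE evenE)
    have k1: "k \<ge> 1" "k < m" using k m2 by auto
    have kt: "k < 2 ^ (t' + 1)" using k less.prems(2) t' by auto
    obtain cs where cs: "ch cs" "last cs = 2 ^ k - 1" "length cs \<le> k + 2 * t'"
      using less.IH[OF k1(2) k1(1) kt] by blast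
    obtain ds where ds: "ch (cs @ ds)" "length ds = k" "last (cs @ ds) = (2 ^ k - 1) * 2 ^ k"
      using ch_double[OF cs(1), of k] cs(2) by auto
    have ne: "cs \<noteq> []" using cs(1) unfolding ch_def by simp
    have "last cs \<in> set (cs @ ds)" using ne by simp
    moreover have "last (cs @ ds) \<in> set (cs @ ds)" using ne by (intro last_in_set) simp
    ultimately have E0: "ch ((cs @ ds) @ [last (cs @ ds) + last cs])"
      using ch_snoc[OF ds(1)] by blast
    have E: "ch ((cs @ ds) @ [(2 ^ k - 1) * 2 ^ k + (2 ^ k - 1)])"
      using E0 unfolding cs(2) ds(3) .
    have pk: "(2::nat) ^ k \<ge> 1" by simp
    have eq: "(2 ^ k - 1) * 2 ^ k + (2 ^ k - 1) = (2::nat) ^ (2 * k) - 1"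
    proof -
      have "(2::nat) ^ (2 * k) = 2 ^ k * 2 ^ k" by (simp add: mult_2 power_add)
      then show ?thesis using aux[OF pk] by simp
    qed
    let ?es = "(cs @ ds) @ [2 ^ (2 * k) - 1]"
    have E': "ch ?es" using E eq by simp
    have lenE: "length ?es \<le> 2 * k + 2 * t' + 1" using cs(3) ds(2) by simp
    show ?thesis
      using k
    proof
      assume "m = 2 * k"
      then show ?thesis using E' lenE t' by (intro exI[of _ ?es]) simp
    next
      assume mk: "m = 2 * k + 1"
      have inE: "(2::nat) ^ (2 * k) - 1 \<in> set ?es" by simp
      have F: "ch (?es @ [(2 ^ (2 * k) - 1) + (2 ^ (2 * k) - 1)])"
        by (rule ch_snoc[OF E' inE inE])
      have "1 \<in> set (?es @ [(2 ^ (2 * k) - 1) + (2 ^ (2 * k) - 1)])"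
        using ch_one[OF F] .
      moreover have "last (?es @ [(2 ^ (2 * k) - 1) + (2 ^ (2 * k) - 1)])
          \<in> set (?es @ [(2 ^ (2 * k) - 1) + (2 ^ (2 * k) - 1)])" by simp
      ultimately have G0: "ch ((?es @ [(2 ^ (2 * k) - 1) + (2 ^ (2 * k) - 1)]) @
          [last (?es @ [(2 ^ (2 * k) - 1) + (2 ^ (2 * k) - 1)]) + 1])"
        using ch_snoc[OF F] by blast
      have G: "ch ((?es @ [(2 ^ (2 * k) - 1) + (2 ^ (2 * k) - 1)]) @
          [((2 ^ (2 * k) - 1) + (2 ^ (2 * k) - 1)) + 1])"
        using G0 unfolding last_snoc .
      have pk2: "(2::nat) ^ (2 * k) \<ge> 1" by simp
      have eq2: "((2 ^ (2 * k) - 1) + (2 ^ (2 * k) - 1)) + 1 = (2::nat) ^ m - 1"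
      proof -
        have "((2::nat) ^ (2 * k) - 1) + (2 ^ (2 * k) - 1) + 1 = 2 * 2 ^ (2 * k) - 1"
          using pk2 by linarith
        then show ?thesis using mk by simp
      qed
      show ?thesis using G eq2 lenE t' mk
        by (intro exI[of _ "(?es @ [(2 ^ (2 * k) - 1) + (2 ^ (2 * k) - 1)]) @ [2 ^ m - 1]"]) simp
    qed
  qed
qed

lemma iota_le:
  assumes "ch cs" "last cs = N"
  shows "iota N \<le> length cs - 1"
proof -
  have "is_addition_chain cs N" using assms unfolding ch_def is_addition_chain_def by auto
  then show ?thesis unfolding iota_def by (intro Least_le) blast
qed

theorem mainTheorem1:
  fixes n :: nat
  assumes "n \<ge> 64"
  shows "real (iota (2 ^ n - 1))
    \<le> real n + 1 - (\<Sum>j = 1..nat \<lfloor>ln (real n) / ln 2\<rfloor>. xi n j)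
       + 3 * real_of_int \<lfloor>ln (real n) / ln 2\<rfloor>"
proof -
  define L where "L = \<lfloor>ln (real n) / ln 2\<rfloor>"
  have npos: "real n > 0" using assms by simp
  have "ln (real n) / ln 2 \<ge> 0" using assms by simp
  then have L0: "L \<ge> 0" unfolding L_def by simp
  define t where "t = nat L"
  have tL: "real t = real_of_int L" using L0 t_def by simp
  have "ln (real n) / ln 2 < real t + 1" using tL L_def by linarith
  then have "log 2 (real n) < real (t + 1)" by (simp add: log_def)
  then have "real n < 2 powr real (t + 1)" using npos
    by (simp add: log_less_iff)
  moreover have "(2::real) powr real (t + 1) = 2 ^ (t + 1)" by (rule powr_realpow) simp
  ultimately have "real n < real (2 ^ (t + 1))" by simp
  then have nt: "n < 2 ^ (t + 1)" by linarith
  obtain cs where cs: "ch cs" "last cs = 2 ^ n - 1" "length cs \<le> n + 2 * t"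
    using build[OF _ nt] assms by auto
  have io: "real (iota (2 ^ n - 1)) \<le> real n - 1 + 2 * real t"
    using iota_le[OF cs(1,2)] cs(3) assms by linarith
  have xi1: "xi n j \<le> 1" for j
  proof -
    have "real (n div 2 ^ j) = of_int \<lfloor>real n / 2 ^ j\<rfloor>"
      by (metis floor_divide_of_nat_eq of_int_of_nat_eq of_nat_numeral of_nat_power)
    then show ?thesis unfolding xi_def by linarith
  qed
  have "(\<Sum>j = 1..t. xi n j) \<le> (\<Sum>j = 1..t. 1)" by (intro sum_mono xi1)
  then have "(\<Sum>j = 1..t. xi n j) \<le> real t" by simp
  then show ?thesis using io tL unfolding t_def[symmetric] L_def[symmetric] by linarith
qed

end
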